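(* Let $\kappa$ be a regular uncountable cardinal. Then (a) the quotient Boolean algebra $\mathcal P(\kappa)/[\kappa]^{<\kappa}$ does not have the $\kappa$-FN, and (b) the power set algebra $\mathcal P(\kappa)$ does not have the $\kappa$-FN.
   Context: For an infinite cardinal $\kappa$, a Boolean algebra $B$ has the $\kappa$-Freese–Nation property ($\kappa$-FN) if there is a map $f:B\to[B]^{<\kappa}$ such that for all $a,b\in B$ with $a\le b$ there is $c\in f(a)\cap f(b)$ with $a\le c\le b$. $[\kappa]^{<\kappa}$ denotes the ideal of subsets of $\kappa$ of cardinality $<\kappa$. *)

theory Defs
  imports Main "HOL-Library.Countable_Set"
begin

text \<open>The cardinal kappa is represented by a set K (kappa = |K|); cardinality
comparisons use the library's card_of and ordLess from Main (HOL-Library for countable).\<close>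

definition kappa_FN :: "'k set \<Rightarrow> 'b set \<Rightarrow> ('b \<Rightarrow> 'b \<Rightarrow> bool) \<Rightarrow> bool" where
  "kappa_FN K B le \<longleftrightarrow>
     (\<exists>f. (\<forall>a\<in>B. f a \<subseteq> B \<and> (card_of (f a), card_of K) \<in> ordLess) \<and>
          (\<forall>a\<in>B. \<forall>b\<in>B. le a b \<longrightarrow> (\<exists>c\<in>f a \<inter> f b. le a c \<and> le c b)))"

definition small_ideal :: "'k set \<Rightarrow> 'k set set" where
  "small_ideal K = {A. A \<subseteq> K \<and> (card_of A, card_of K) \<in> ordLess}"

definition mod_small :: "'k set \<Rightarrow> ('k set \<times> 'k set) set" where
  "mod_small K = {(A, B). A \<subseteq> K \<and> B \<subseteq> K \<and> (A - B) \<union> (B - A) \<in> small_ideal K}"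

definition quot_carrier :: "'k set \<Rightarrow> 'k set set set" where
  "quot_carrier K = Pow K // mod_small K"

definition quot_le :: "'k set \<Rightarrow> 'k set set \<Rightarrow> 'k set set \<Rightarrow> bool" where
  "quot_le K X Y \<longleftrightarrow> (\<exists>A\<in>X. \<exists>B\<in>Y. A - B \<in> small_ideal K)"

end

theory Submission
  imports Defs
begin

unbundle cardinal_syntax

lemma fin_small:
  assumes "finite A" "infinite K"
  shows "|A| <o |K|"
  using finite_ordLess_infinite[of "|A|" "|K|"] assms card_of_Well_order[of A] card_of_Well_order[of K]
  by (simp add: Field_card_of)

lemma sub_small:
  assumes "A \<subseteq> B" "|B| <o |K|"
  shows "|A| <o |K|"
  using assms card_of_mono1 ordLeq_ordLess_trans by blast

lemma un_small:
  assumes "infinite K" "|A| <o |K|" "|B| <o |K|"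
  shows "|A \<union> B| <o |K|"
  using card_of_Un_ordLess_infinite assms by blast

lemma K_not_small: "\<not> |K| <o |K|"
  using ordLess_irreflexive by blast

lemma two_elems:
  assumes "\<not> |A| <o |K|" "infinite K"
  shows "\<exists>p q. p \<in> A \<and> q \<in> A \<and> p \<noteq> q"
proof -
  have "infinite A" using assms fin_small by blast
  then obtain p where p: "p \<in> A" by (metis finite.emptyI ex_in_conv)
  have "infinite (A - {p})" using \<open>infinite A\<close> by simp
  then obtain q where "q \<in> A - {p}" by (metis finite.emptyI ex_in_conv)
  thus ?thesis using p by blast
qed

lemma comb:
  fixes K :: "'k set" and e :: "'k \<Rightarrow> 'k set"
  assumes inf: "infinite K" and sub: "\<forall>\<beta>\<in>K. e \<beta> \<subseteq> K"
  shows "\<exists>Z\<subseteq>K. \<not> |Z| <o |K| \<and> (\<forall>\<beta>\<in>K. \<not> |e \<beta>| <o |K| \<longrightarrow> \<not> e \<beta> \<subseteq> Z)"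
proof -
  define r where "r = |K|"
  have WO: "Well_order r" unfolding r_def by (rule card_of_Well_order)
  have CO: "Card_order r" unfolding r_def by (rule card_of_Card_order)
  have FK: "Field r = K" unfolding r_def by (rule Field_card_of)
  define e' where "e' \<beta> = (if |e \<beta>| <o |K| then K else e \<beta>)" for \<beta>
  have e'sub: "e' \<beta> \<subseteq> K" if "\<beta> \<in> K" for \<beta> using sub that unfolding e'_def by auto
  have e'big: "\<not> |e' \<beta>| <o |K|" for \<beta> unfolding e'_def using K_not_small by auto
  define S where "S = r - Id"
  have wfS: "wf S" unfolding S_def using WO wo_rel.WF wo_rel_def by blast
  define U where "U h \<beta> = (fst \<circ> h) ` underS r \<beta> \<union> (snd \<circ> h) ` underS r \<beta>"
    for h :: "'k \<Rightarrow> 'k \<times> 'k" and \<beta>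
  define F where "F h \<beta> = (SOME pq. fst pq \<in> e' \<beta> \<and> snd pq \<in> e' \<beta> \<and> fst pq \<noteq> snd pq
       \<and> fst pq \<notin> U h \<beta> \<and> snd pq \<notin> U h \<beta>)" for h \<beta>
  define H where "H = wfrec S F"
  have fixH: "H \<beta> = F H \<beta>" for \<beta>
  proof -
    have "H \<beta> = F (cut H S \<beta>) \<beta>" unfolding H_def by (rule wfrec[OF wfS])
    moreover have "U (cut H S \<beta>) \<beta> = U H \<beta>"
    proof -
      have "\<And>\<gamma>. \<gamma> \<in> underS r \<beta> \<Longrightarrow> cut H S \<beta> \<gamma> = H \<gamma>"
        by (rule cut_apply) (auto simp: S_def underS_def)
      thus ?thesis unfolding U_def by (auto simp: image_def)
    qed
    ultimately show ?thesis unfolding F_def by simp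
  qed
  have props: "fst (H \<beta>) \<in> e' \<beta> \<and> snd (H \<beta>) \<in> e' \<beta> \<and> fst (H \<beta>) \<noteq> snd (H \<beta>)
       \<and> fst (H \<beta>) \<notin> U H \<beta> \<and> snd (H \<beta>) \<notin> U H \<beta>" if b: "\<beta> \<in> K" for \<beta>
  proof -
    have us: "|underS r \<beta>| <o |K|"
      using card_of_underS[OF CO] b FK r_def by simp
    have "|U H \<beta>| <o |K|" unfolding U_def
      by (rule un_small[OF inf]; rule ordLeq_ordLess_trans[OF card_of_image us])
    hence "\<not> |e' \<beta> - U H \<beta>| <o |K|"
      using e'big[of \<beta>] un_small[OF inf, of "e' \<beta> - U H \<beta>" "U H \<beta>"] sub_small[of "e' \<beta>" "(e' \<beta> - U H \<beta>) \<union> U H \<beta>"]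
      by blast
    then obtain p q where "p \<in> e' \<beta> - U H \<beta>" "q \<in> e' \<beta> - U H \<beta>" "p \<noteq> q"
      using two_elems[OF _ inf] by blast
    hence ex: "\<exists>pq. fst pq \<in> e' \<beta> \<and> snd pq \<in> e' \<beta> \<and> fst pq \<noteq> snd pq
       \<and> fst pq \<notin> U H \<beta> \<and> snd pq \<notin> U H \<beta>" by (intro exI[of _ "(p,q)"]) auto
    show ?thesis unfolding fixH[of \<beta>] F_def by (rule someI_ex[OF ex])
  qed
  define P where "P \<beta> = fst (H \<beta>)" for \<beta>
  define Q where "Q \<beta> = snd (H \<beta>)" for \<beta>
  have lt: "(\<gamma>, \<beta>) \<in> r \<or> (\<beta>, \<gamma>) \<in> r" if "\<gamma> \<in> K" "\<beta> \<in> K" for \<gamma> \<beta>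
    using wo_rel.TOTALS[of r] WO FK that unfolding wo_rel_def by blast
  have inU: "P \<gamma> \<in> U H \<beta> \<and> Q \<gamma> \<in> U H \<beta>" if "(\<gamma>, \<beta>) \<in> r" "\<gamma> \<noteq> \<beta>" for \<gamma> \<beta>
    using that unfolding U_def P_def Q_def underS_def by auto
  have injP: "inj_on P K"
  proof (rule inj_onI)
    fix x y assume xy: "x \<in> K" "y \<in> K" "P x = P y"
    show "x = y"
    proof (rule ccontr)
      assume ne: "x \<noteq> y"
      from lt[OF xy(1,2)] show False
      proof
        assume "(x, y) \<in> r"
        hence "P x \<in> U H y" using inU ne by blast
        thus False using props[OF xy(2)] xy(3) unfolding P_def by simp
      next
        assume "(y, x) \<in> r"
        hence "P y \<in> U H x" using inU ne by blast
        thus False using props[OF xy(1)] xy(3) unfolding P_def by simp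
      qed
    qed
  qed
  have QnP: "Q \<beta> \<noteq> P \<gamma>" if "\<beta> \<in> K" "\<gamma> \<in> K" for \<beta> \<gamma>
  proof (cases "\<beta> = \<gamma>")
    case True thus ?thesis using props[OF that(1)] unfolding P_def Q_def by auto
  next
    case False
    from lt[OF that(2,1)] show ?thesis
    proof
      assume "(\<gamma>, \<beta>) \<in> r"
      hence "P \<gamma> \<in> U H \<beta>" using inU False by blast
      thus ?thesis using props[OF that(1)] unfolding Q_def by auto
    next
      assume "(\<beta>, \<gamma>) \<in> r"
      hence "Q \<beta> \<in> U H \<gamma>" using inU False by blast
      thus ?thesis using props[OF that(2)] unfolding P_def by auto
    qed
  qed
  define Z where "Z = P ` K"
  have ZK: "Z \<subseteq> K" unfolding Z_def P_def using props e'sub by blast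
  have "|K| \<le>o |Z|" unfolding Z_def using card_of_ordLeqI[OF injP] by blast
  hence Zbig: "\<not> |Z| <o |K|" using not_ordLess_ordLeq by blast
  have "\<not> e \<beta> \<subseteq> Z" if "\<beta> \<in> K" "\<not> |e \<beta>| <o |K|" for \<beta>
  proof
    assume "e \<beta> \<subseteq> Z"
    moreover have "Q \<beta> \<in> e \<beta>" using props[OF that(1)] that(2) unfolding Q_def e'_def by simp
    ultimately obtain \<gamma> where "\<gamma> \<in> K" "Q \<beta> = P \<gamma>" unfolding Z_def by blast
    thus False using QnP that(1) by blast
  qed
  thus ?thesis using ZK Zbig by blast
qed


lemma abstract:
  fixes K :: "'k set" and B :: "'b set" and le :: "'b \<Rightarrow> 'b \<Rightarrow> bool"
    and D :: "'k \<Rightarrow> 'b" and X :: "'k set \<Rightarrow> 'b"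
  assumes reg: "regularCard |K|" and inf: "infinite K"
    and FN: "kappa_FN K B le"
    and DB: "\<forall>\<xi>\<in>K. D \<xi> \<in> B" and XB: "\<forall>Z. Z \<subseteq> K \<longrightarrow> X Z \<in> B"
    and DX: "\<forall>Z \<xi>. Z \<subseteq> K \<longrightarrow> \<xi> \<in> Z \<longrightarrow> le (D \<xi>) (X Z)"
    and sep: "\<forall>Z c q. Z \<subseteq> K \<longrightarrow> c \<in> B \<longrightarrow> q \<in> K \<longrightarrow> q \<notin> Z \<longrightarrow> le (D q) c \<longrightarrow> le c (X Z) \<longrightarrow> False"
  shows False
proof -
  obtain f where f1: "\<forall>a\<in>B. f a \<subseteq> B \<and> |f a| <o |K|"
    and f2: "\<forall>a\<in>B. \<forall>b\<in>B. le a b \<longrightarrow> (\<exists>c\<in>f a \<inter> f b. le a c \<and> le c b)"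
    using FN unfolding kappa_FN_def by blast
  define I where "I = (SIGMA \<xi>:K. f (D \<xi>))"
  have "|I| \<le>o |K|" unfolding I_def
    apply (rule card_of_Sigma_ordLeq_infinite[OF inf])
     apply (rule card_of_mono1, simp)
    using f1 DB ordLess_imp_ordLeq by blast
  obtain g where g: "I \<subseteq> g ` K"
  proof (cases "I = {}")
    case True thus ?thesis using that by blast
  next
    case False thus ?thesis using that card_of_ordLeq2[of I K] \<open>|I| \<le>o |K|\<close> by blast
  qed
  define e where "e \<beta> = {\<eta> \<in> K. le (D \<eta>) (snd (g \<beta>))}" for \<beta>
  obtain Z where ZK: "Z \<subseteq> K" and Zbig: "\<not> |Z| <o |K|"
    and Ze: "\<forall>\<beta>\<in>K. \<not> |e \<beta>| <o |K| \<longrightarrow> \<not> e \<beta> \<subseteq> Z"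
    using comb[OF inf, of e] unfolding e_def by blast
  have XZB: "X Z \<in> B" using XB ZK by blast
  have "\<forall>\<xi>\<in>Z. \<exists>c. c \<in> f (D \<xi>) \<inter> f (X Z) \<and> le (D \<xi>) c \<and> le c (X Z)"
  proof
    fix \<xi> assume xz: "\<xi> \<in> Z"
    have a: "D \<xi> \<in> B" using DB ZK xz by blast
    have l: "le (D \<xi>) (X Z)" using DX ZK xz by blast
    show "\<exists>c. c \<in> f (D \<xi>) \<inter> f (X Z) \<and> le (D \<xi>) c \<and> le c (X Z)"
      using f2 a XZB l by blast
  qed
  then obtain cf where cf: "\<forall>\<xi>\<in>Z. cf \<xi> \<in> f (D \<xi>) \<inter> f (X Z) \<and> le (D \<xi>) (cf \<xi>) \<and> le (cf \<xi>) (X Z)"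
    by (auto dest!: bchoice)
  have CI: "Cinfinite |K|" using inf card_of_Card_order[of K] by (simp add: cinfinite_def Field_card_of)
  obtain c0 where c0: "c0 \<in> f (X Z)" and Tbig: "\<not> |{\<xi>\<in>Z. cf \<xi> = c0}| <o |K|"
  proof (rule ccontr)
    assume "\<not> thesis"
    hence all: "\<And>c. c \<in> f (X Z) \<Longrightarrow> |{\<xi>\<in>Z. cf \<xi> = c}| <o |K|" using that by blast
    have "|\<Union>c\<in>f (X Z). {\<xi>\<in>Z. cf \<xi> = c}| <o |K|"
      by (rule regularCard_UNION_bound[OF CI reg]) (use f1 XZB all in auto)
    moreover have "Z \<subseteq> (\<Union>c\<in>f (X Z). {\<xi>\<in>Z. cf \<xi> = c})" using cf by blast
    ultimately show False using Zbig sub_small by blast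
  qed
  define T where "T = {\<xi>\<in>Z. cf \<xi> = c0}"
  have "T \<noteq> {}" using Tbig fin_small[OF _ inf] unfolding T_def by fastforce
  then obtain \<xi>0 where x0: "\<xi>0 \<in> T" by blast
  have "(\<xi>0, c0) \<in> I" using x0 cf ZK unfolding T_def I_def by blast
  hence "(\<xi>0, c0) \<in> g ` K" using g by (rule subsetD[rotated])
  then obtain \<beta> where b: "\<beta> \<in> K" "g \<beta> = (\<xi>0, c0)" by (metis imageE)
  have "T \<subseteq> e \<beta>"
  proof
    fix \<xi> assume xt: "\<xi> \<in> T"
    hence xz: "\<xi> \<in> Z" and xc: "cf \<xi> = c0" unfolding T_def by simp_all
    have "le (D \<xi>) c0" using cf xz xc by metis
    moreover have "\<xi> \<in> K" using xz ZK by (rule subsetD[rotated])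
    ultimately show "\<xi> \<in> e \<beta>" unfolding e_def using b(2) by simp
  qed
  hence "\<not> |e \<beta>| <o |K|" using Tbig sub_small unfolding T_def by blast
  hence "\<not> e \<beta> \<subseteq> Z" using Ze b by blast
  then obtain q where q0: "q \<in> e \<beta>" "q \<notin> Z" by blast
  hence q: "q \<in> K" "q \<notin> Z" "le (D q) c0" unfolding e_def using b(2) by simp_all
  have "c0 \<in> B" using c0 f1 XZB by blast
  moreover have "le c0 (X Z)" using x0 cf unfolding T_def by blast
  ultimately show False using sep[rule_format, OF ZK _ q(1) q(2) q(3)] by blast
qed


lemma partB:
  fixes K :: "'k set"
  assumes reg: "regularCard |K|" and inf: "infinite K"
  shows "\<not> kappa_FN K (Pow K) (\<subseteq>)"
proof
  assume FN: "kappa_FN K (Pow K) (\<subseteq>)"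
  show False
  proof (rule abstract[OF reg inf FN, of "\<lambda>\<xi>. {\<xi>}" "\<lambda>Z. Z"])
    show "\<forall>\<xi>\<in>K. {\<xi>} \<in> Pow K" by simp
    show "\<forall>Z. Z \<subseteq> K \<longrightarrow> Z \<in> Pow K" by simp
    show "\<forall>Z \<xi>. Z \<subseteq> K \<longrightarrow> \<xi> \<in> Z \<longrightarrow> {\<xi>} \<subseteq> Z" by simp
    show "\<forall>Z c q. Z \<subseteq> K \<longrightarrow> c \<in> Pow K \<longrightarrow> q \<in> K \<longrightarrow> q \<notin> Z \<longrightarrow> {q} \<subseteq> c \<longrightarrow> c \<subseteq> Z \<longrightarrow> False"
      by blast
  qed
qed

lemma partA:
  fixes K :: "'k set"
  assumes reg: "regularCard |K|" and inf: "infinite K"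
  shows "\<not> kappa_FN K (quot_carrier K) (quot_le K)"
proof
  assume FN: "kappa_FN K (quot_carrier K) (quot_le K)"
  have "|K \<times> K| =o |K|" using card_of_Times_same_infinite[OF inf] .
  then obtain g where g: "bij_betw g (K \<times> K) K" using card_of_ordIso by blast
  define Ds where "Ds \<xi> = g ` ({\<xi>} \<times> K)" for \<xi>
  define Xs where "Xs Z = g ` (Z \<times> K)" for Z
  define cls where "cls A = mod_small K `` {A}" for A
  have emp: "{} \<in> small_ideal K" unfolding small_ideal_def using fin_small[OF finite.emptyI inf] by simp
  have clsC: "cls A \<in> quot_carrier K" if "A \<subseteq> K" for A
    unfolding cls_def quot_carrier_def using that by (intro quotientI) simp
  have self: "A \<in> cls A" if "A \<subseteq> K" for A
    unfolding cls_def mod_small_def using that emp by simp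
  have gK: "g ` (K \<times> K) = K" using g by (simp add: bij_betw_def)
  have ginj: "inj_on g (K \<times> K)" using g by (simp add: bij_betw_def)
  have DsK: "Ds \<xi> \<subseteq> K" if "\<xi> \<in> K" for \<xi> unfolding Ds_def using gK that by blast
  have XsK: "Xs Z \<subseteq> K" if "Z \<subseteq> K" for Z unfolding Xs_def using gK that by blast
  have DsXs: "Ds \<xi> \<subseteq> Xs Z" if "\<xi> \<in> Z" for \<xi> Z unfolding Ds_def Xs_def using that by blast
  have disj: "Ds q \<inter> Xs Z = {}" if "q \<in> K" "q \<notin> Z" "Z \<subseteq> K" for q Z
  proof -
    { fix x assume "x \<in> Ds q" "x \<in> Xs Z"
      then obtain k1 k2 z where k: "k1 \<in> K" "k2 \<in> K" "z \<in> Z" "x = g (q, k1)" "x = g (z, k2)"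
        unfolding Ds_def Xs_def by blast
      have "(z, k2) \<in> K \<times> K" using k that by blast
      moreover have "(q, k1) \<in> K \<times> K" using k that by blast
      ultimately have "(q, k1) = (z, k2)" using ginj k(4,5) unfolding inj_on_def by metis
      hence False using k that by simp }
    thus ?thesis by blast
  qed
  have Dsbig: "\<not> |Ds q| <o |K|" if "q \<in> K" for q
  proof -
    have "inj_on (\<lambda>k. g (q, k)) K" using ginj that by (auto simp: inj_on_def)
    hence "|K| \<le>o |Ds q|" by (rule card_of_ordLeqI) (auto simp: Ds_def)
    thus ?thesis using not_ordLess_ordLeq by blast
  qed
  have msd: "|A - B| <o |K| \<and> |B - A| <o |K|" if "(A, B) \<in> mod_small K" for A B
    using that unfolding mod_small_def small_ideal_def
    using sub_small[of "A - B" "(A - B) \<union> (B - A)" K] sub_small[of "B - A" "(A - B) \<union> (B - A)" K]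
    by auto
  show False
  proof (rule abstract[OF reg inf FN, of "\<lambda>\<xi>. cls (Ds \<xi>)" "\<lambda>Z. cls (Xs Z)"])
    show "\<forall>\<xi>\<in>K. cls (Ds \<xi>) \<in> quot_carrier K" using clsC DsK by blast
    show "\<forall>Z. Z \<subseteq> K \<longrightarrow> cls (Xs Z) \<in> quot_carrier K" using clsC XsK by blast
    show "\<forall>Z \<xi>. Z \<subseteq> K \<longrightarrow> \<xi> \<in> Z \<longrightarrow> quot_le K (cls (Ds \<xi>)) (cls (Xs Z))"
    proof (intro allI impI)
      fix Z \<xi> assume Z: "Z \<subseteq> K" and x: "\<xi> \<in> Z"
      have "Ds \<xi> - Xs Z = {}" using DsXs[OF x] by blast
      have "\<xi> \<in> K" using x Z by (rule subsetD[rotated])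
      hence "Ds \<xi> \<in> cls (Ds \<xi>)" by (intro self DsK)
      moreover have "Xs Z \<in> cls (Xs Z)" by (intro self XsK Z)
      moreover note \<open>Ds \<xi> - Xs Z = {}\<close>
      ultimately show "quot_le K (cls (Ds \<xi>)) (cls (Xs Z))" unfolding quot_le_def
        using emp by metis
    qed
    show "\<forall>Z c q. Z \<subseteq> K \<longrightarrow> c \<in> quot_carrier K \<longrightarrow> q \<in> K \<longrightarrow> q \<notin> Z \<longrightarrow>
        quot_le K (cls (Ds q)) c \<longrightarrow> quot_le K c (cls (Xs Z)) \<longrightarrow> False"
    proof (intro allI impI)
      fix Z c q assume Z: "Z \<subseteq> K" and c: "c \<in> quot_carrier K" and q: "q \<in> K" "q \<notin> Z"
        and l1: "quot_le K (cls (Ds q)) c" and l2: "quot_le K c (cls (Xs Z))"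
      obtain C where C: "c = cls C" using c unfolding quot_carrier_def cls_def by (auto elim: quotientE)
      obtain A1 A2 where A1: "A1 \<in> cls (Ds q)" and A2: "A2 \<in> c" and s12: "A1 - A2 \<in> small_ideal K"
        using l1 unfolding quot_le_def by blast
      obtain A3 B3 where A3: "A3 \<in> c" and B3: "B3 \<in> cls (Xs Z)" and s3: "A3 - B3 \<in> small_ideal K"
        using l2 unfolding quot_le_def by blast
      have m1: "(Ds q, A1) \<in> mod_small K" using A1 unfolding cls_def by simp
      have m2: "(C, A2) \<in> mod_small K" using A2 C unfolding cls_def by simp
      have m3: "(C, A3) \<in> mod_small K" using A3 C unfolding cls_def by simp
      have m4: "(Xs Z, B3) \<in> mod_small K" using B3 unfolding cls_def by simp
      have t1: "|Ds q - A1| <o |K|" using msd[OF m1] by blast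
      have t2: "|A1 - A2| <o |K|" using s12 unfolding small_ideal_def by blast
      have t3: "|A2 - C| <o |K|" using msd[OF m2] by blast
      have t4: "|C - A3| <o |K|" using msd[OF m3] by blast
      have t5: "|A3 - B3| <o |K|" using s3 unfolding small_ideal_def by blast
      have t6: "|B3 - Xs Z| <o |K|" using msd[OF m4] by blast
      have sm: "|(Ds q - A1) \<union> (A1 - A2) \<union> (A2 - C) \<union> (C - A3) \<union> (A3 - B3) \<union> (B3 - Xs Z)| <o |K|"
        by (intro un_small[OF inf] t1 t2 t3 t4 t5 t6)
      have "Ds q \<subseteq> (Ds q - A1) \<union> (A1 - A2) \<union> (A2 - C) \<union> (C - A3) \<union> (A3 - B3) \<union> (B3 - Xs Z)"
        using disj[OF q Z] by blast
      thus False using sm sub_small Dsbig[OF q(1)] by blast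
    qed
  qed
qed

theorem proposition5p3:
  fixes K :: "'k set"
  assumes "regularCard (card_of K)"
    and "\<not> countable K"
  shows "\<not> kappa_FN K (quot_carrier K) (quot_le K) \<and> \<not> kappa_FN K (Pow K) (\<subseteq>)"
proof -
  have inf: "infinite K" using assms(2) countable_finite by blast
  show ?thesis using partA[OF assms(1) inf] partB[OF assms(1) inf] by blast
qed

end
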